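(* Let $D$ be a drawing in $[0,a]\times[0,b]$ with segments $e_1,\dots,e_\ell$, let $K\subset\mathbb{R}^\ell$ be the linear space of intensity vectors $(s_1,\dots,s_\ell)$ satisfying Kirchhoff's law at every interior node of $D$, and $d=\dim K$. Call a parametrization an injective map $\tau:\{1,\dots,d\}\to\{1,\dots,\ell\}$ such that the map $K\to\mathbb{R}^d$, $(s_i)_i\mapsto(s_{\tau(j)})_j$, is bijective, and let $\mathfrak{D}_\tau:\mathbb{R}^d\to K\subset\mathbb{R}^\ell$ be its inverse. Then for any two parametrizations $\tau,\tau'$, $$\left|\det\left(\mathfrak{D}_\tau^{-1}\circ\mathfrak{D}_{\tau'}\right)\right|=1,$$ where $\mathfrak{D}_\tau^{-1}:K\to\mathbb{R}^d$ denotes the inverse of $\mathfrak{D}_\tau$ onto its image $K$.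
   Context: A drawing in the box $[0,a]\times[0,b]$ is a finite collection of weighted segments $((x_-,y_-),(x_+,y_+),s)$, each vertical ($x_-=x_+$, $y_-<y_+$) or horizontal ($y_-=y_+$, $x_-<x_+$), with real intensity $s$, whose endpoints are nodes. Nodes on the box boundary are entries (bottom/left sides, where a segment starts) and exits (top/right sides, where a segment ends); every other node is interior and is the meeting point of segments coming from the south and/or west and leaving to the north and/or east (splits: one incoming and two outgoing segments; turns: one incoming, one outgoing of the other direction; coalescences: two incoming, one outgoing; crossings: two incoming, two outgoing). Kirchhoff's law at an interior node: the sum of the intensities of the segments arriving from the south and the west equals the sum of the intensities of the segments leaving to the north and the east. *)

theory Defs
  imports "Jordan_Normal_Form.VS_Connect"
begin

text \<open>Geometry of drawings. A point is a pair (x,y); a segment is a pair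
  (start point, end point). Segments are indexed 0,...,l-1 by their position in a list.\<close>

type_synonym point = "real \<times> real"
type_synonym segment = "point \<times> point"

definition vertical_seg :: "segment \<Rightarrow> bool" where
  "vertical_seg e \<longleftrightarrow> fst (fst e) = fst (snd e) \<and> snd (fst e) < snd (snd e)"

definition horizontal_seg :: "segment \<Rightarrow> bool" where
  "horizontal_seg e \<longleftrightarrow> snd (fst e) = snd (snd e) \<and> fst (fst e) < fst (snd e)"

definition in_box :: "real \<Rightarrow> real \<Rightarrow> point \<Rightarrow> bool" where
  "in_box a b p \<longleftrightarrow> 0 \<le> fst p \<and> fst p \<le> a \<and> 0 \<le> snd p \<and> snd p \<le> b"

definition on_entry_side :: "real \<Rightarrow> real \<Rightarrow> point \<Rightarrow> bool" where
  "on_entry_side a b p \<longleftrightarrow> in_box a b p \<and> (fst p = 0 \<or> snd p = 0)"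

definition on_exit_side :: "real \<Rightarrow> real \<Rightarrow> point \<Rightarrow> bool" where
  "on_exit_side a b p \<longleftrightarrow> in_box a b p \<and> (fst p = a \<or> snd p = b)"

definition on_boundary :: "real \<Rightarrow> real \<Rightarrow> point \<Rightarrow> bool" where
  "on_boundary a b p \<longleftrightarrow> on_entry_side a b p \<or> on_exit_side a b p"

definition nodes :: "segment list \<Rightarrow> point set" where
  "nodes S = fst ` set S \<union> snd ` set S"

definition interior_node :: "real \<Rightarrow> real \<Rightarrow> segment list \<Rightarrow> point \<Rightarrow> bool" where
  "interior_node a b S p \<longleftrightarrow> p \<in> nodes S \<and> \<not> on_boundary a b p"

definition from_south :: "segment list \<Rightarrow> point \<Rightarrow> nat set" where
  "from_south S p = {i. i < length S \<and> vertical_seg (S ! i) \<and> snd (S ! i) = p}"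

definition from_west :: "segment list \<Rightarrow> point \<Rightarrow> nat set" where
  "from_west S p = {i. i < length S \<and> horizontal_seg (S ! i) \<and> snd (S ! i) = p}"

definition to_north :: "segment list \<Rightarrow> point \<Rightarrow> nat set" where
  "to_north S p = {i. i < length S \<and> vertical_seg (S ! i) \<and> fst (S ! i) = p}"

definition to_east :: "segment list \<Rightarrow> point \<Rightarrow> nat set" where
  "to_east S p = {i. i < length S \<and> horizontal_seg (S ! i) \<and> fst (S ! i) = p}"

definition incoming :: "segment list \<Rightarrow> point \<Rightarrow> nat set" where
  "incoming S p = from_south S p \<union> from_west S p"

definition outgoing :: "segment list \<Rightarrow> point \<Rightarrow> nat set" where
  "outgoing S p = to_north S p \<union> to_east S p"

definition interior_node_ok :: "segment list \<Rightarrow> point \<Rightarrow> bool" where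
  "interior_node_ok S p \<longleftrightarrow>
     (let cS = card (from_south S p); cW = card (from_west S p);
          cN = card (to_north S p); cE = card (to_east S p) in
      cS \<le> 1 \<and> cW \<le> 1 \<and> cN \<le> 1 \<and> cE \<le> 1 \<and>
      ((cS + cW = 1 \<and> cN + cE = 2) \<comment> \<open>split\<close>
       \<or> (cS = 1 \<and> cW = 0 \<and> cN = 0 \<and> cE = 1) \<or> (cS = 0 \<and> cW = 1 \<and> cN = 1 \<and> cE = 0) \<comment> \<open>turn\<close>
       \<or> (cS + cW = 2 \<and> cN + cE = 1) \<comment> \<open>coalescence\<close>
       \<or> (cS + cW = 2 \<and> cN + cE = 2) \<comment> \<open>crossing\<close>))"

definition drawing :: "real \<Rightarrow> real \<Rightarrow> segment list \<Rightarrow> bool" where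
  "drawing a b S \<longleftrightarrow>
     0 < a \<and> 0 < b \<and> distinct S \<and>
     (\<forall>e \<in> set S. (vertical_seg e \<or> horizontal_seg e) \<and> in_box a b (fst e) \<and> in_box a b (snd e)) \<and>
     (\<forall>p \<in> nodes S. on_boundary a b p \<longrightarrow>
        (on_entry_side a b p \<and> incoming S p = {}) \<comment> \<open>entry: segments only start here\<close>
      \<or> (on_exit_side a b p \<and> outgoing S p = {})) \<comment> \<open>exit: segments only end here\<close> \<and>
     (\<forall>p. interior_node a b S p \<longrightarrow> interior_node_ok S p)"

definition kirchhoff_space :: "real \<Rightarrow> real \<Rightarrow> segment list \<Rightarrow> real vec set" where
  "kirchhoff_space a b S =
     {s \<in> carrier_vec (length S). \<forall>p. interior_node a b S p \<longrightarrow>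
        (\<Sum>i \<in> incoming S p. s $ i) = (\<Sum>i \<in> outgoing S p. s $ i)}"

definition kirchhoff_dim :: "real \<Rightarrow> real \<Rightarrow> segment list \<Rightarrow> nat" where
  "kirchhoff_dim a b S =
     vectorspace.dim class_ring
       ((module_vec TYPE(real) (length S))\<lparr>carrier := kirchhoff_space a b S\<rparr>)"

definition coord_map :: "nat \<Rightarrow> (nat \<Rightarrow> nat) \<Rightarrow> real vec \<Rightarrow> real vec" where
  "coord_map d \<tau> s = vec d (\<lambda>j. s $ \<tau> j)"

definition parametrization :: "real \<Rightarrow> real \<Rightarrow> segment list \<Rightarrow> (nat \<Rightarrow> nat) \<Rightarrow> bool" where
  "parametrization a b S \<tau> \<longleftrightarrow>
     (let d = kirchhoff_dim a b S in
      inj_on \<tau> {..<d} \<and> \<tau> ` {..<d} \<subseteq> {..<length S} \<and>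
      bij_betw (coord_map d \<tau>) (kirchhoff_space a b S) (carrier_vec d))"

definition param_inv :: "real \<Rightarrow> real \<Rightarrow> segment list \<Rightarrow> (nat \<Rightarrow> nat) \<Rightarrow> real vec \<Rightarrow> real vec" where
  "param_inv a b S \<tau> = the_inv_into (kirchhoff_space a b S) (coord_map (kirchhoff_dim a b S) \<tau>)"

definition matrix_of_map :: "nat \<Rightarrow> (real vec \<Rightarrow> real vec) \<Rightarrow> real mat" where
  "matrix_of_map d f = mat d d (\<lambda>(j, k). f (unit_vec d k) $ j)"

end

theory Submission
  imports Defs
begin


definition netsol :: "nat set \<Rightarrow> 'v set \<Rightarrow> (nat \<Rightarrow> 'v) \<Rightarrow> (nat \<Rightarrow> 'v) \<Rightarrow> (nat \<Rightarrow> real) \<Rightarrow> bool" where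
  "netsol E V h t s \<longleftrightarrow> (\<forall>p\<in>V. (\<Sum>i\<in>{i\<in>E. h i = p}. s i) = (\<Sum>i\<in>{i\<in>E. t i = p}. s i))"

definition goodN :: "nat set \<Rightarrow> nat set \<Rightarrow> 'v set \<Rightarrow> (nat \<Rightarrow> 'v) \<Rightarrow> (nat \<Rightarrow> 'v) \<Rightarrow> bool" where
  "goodN E N V h t \<longleftrightarrow> (\<forall>v. (\<forall>i\<in>E-N. v i = 0) \<longrightarrow> netsol E V h t v \<longrightarrow> (\<forall>i\<in>N. v i = 0))"

definition intN :: "nat set \<Rightarrow> nat set \<Rightarrow> 'v set \<Rightarrow> (nat \<Rightarrow> 'v) \<Rightarrow> (nat \<Rightarrow> 'v) \<Rightarrow> bool" where
  "intN E N V h t \<longleftrightarrow> (\<forall>s. netsol E V h t s \<longrightarrow> (\<forall>i\<in>E-N. s i \<in> \<int>) \<longrightarrow> (\<forall>i\<in>N. s i \<in> \<int>))"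

lemma netsol_sym: "netsol E V h t s = netsol E V t h s"
  unfolding netsol_def by metis

lemma goodN_sym: "goodN E N V h t = goodN E N V t h"
  unfolding goodN_def using netsol_sym by metis

lemma intN_sym: "intN E N V h t = intN E N V t h"
  unfolding intN_def using netsol_sym by metis

lemma netsol_cong: "(\<And>i. i \<in> E \<Longrightarrow> v i = w i) \<Longrightarrow> netsol E V h t v = netsol E V h t w"
  unfolding netsol_def by (intro ball_cong refl arg_cong2[where f="(=)"] sum.cong) auto

lemma merge_other:
  fixes v :: "nat \<Rightarrow> real"
  assumes "finite E" "e \<in> E" "h e = p" "t e = q" "p \<noteq> q" "x \<noteq> p" "x \<noteq> q"
  shows "(\<Sum>i\<in>{i\<in>E-{e}. (if h i = p then q else h i) = x}. v i) = (\<Sum>i\<in>{i\<in>E. h i = x}. v i)"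
    and "(\<Sum>i\<in>{i\<in>E-{e}. (if t i = p then q else t i) = x}. v i) = (\<Sum>i\<in>{i\<in>E. t i = x}. v i)"
proof -
  have "{i\<in>E-{e}. (if h i = p then q else h i) = x} = {i\<in>E. h i = x}" using assms by auto
  then show "(\<Sum>i\<in>{i\<in>E-{e}. (if h i = p then q else h i) = x}. v i) = (\<Sum>i\<in>{i\<in>E. h i = x}. v i)" by simp
  have "{i\<in>E-{e}. (if t i = p then q else t i) = x} = {i\<in>E. t i = x}" using assms by auto
  then show "(\<Sum>i\<in>{i\<in>E-{e}. (if t i = p then q else t i) = x}. v i) = (\<Sum>i\<in>{i\<in>E. t i = x}. v i)" by simp
qed

lemma merge_q:
  fixes v :: "nat \<Rightarrow> real"
  assumes "finite E" "e \<in> E" "h e = p" "t e = q" "p \<noteq> q"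
  shows "(\<Sum>i\<in>{i\<in>E-{e}. (if h i = p then q else h i) = q}. v i) = (\<Sum>i\<in>{i\<in>E. h i = q}. v i) + (\<Sum>i\<in>{i\<in>E. h i = p}. v i) - v e"
    and "(\<Sum>i\<in>{i\<in>E-{e}. (if t i = p then q else t i) = q}. v i) = (\<Sum>i\<in>{i\<in>E. t i = q}. v i) + (\<Sum>i\<in>{i\<in>E. t i = p}. v i) - v e"
proof -
  have s1: "{i\<in>E-{e}. (if h i = p then q else h i) = q} = ({i\<in>E. h i = q} \<union> {i\<in>E. h i = p}) - {e}" using assms by auto
  have fin1: "finite ({i\<in>E. h i = q} \<union> {i\<in>E. h i = p})" using assms by auto
  have "(\<Sum>i\<in>({i\<in>E. h i = q} \<union> {i\<in>E. h i = p}) - {e}. v i) = (\<Sum>i\<in>({i\<in>E. h i = q} \<union> {i\<in>E. h i = p}). v i) - v e"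
    proof -
    have "e \<in> {i\<in>E. h i = q} \<union> {i\<in>E. h i = p}" using assms by auto
    from sum.remove[OF fin1 this, of v] show ?thesis by linarith
  qed
  also have "\<dots> = (\<Sum>i\<in>{i\<in>E. h i = q}. v i) + (\<Sum>i\<in>{i\<in>E. h i = p}. v i) - v e"
    using assms by (subst sum.union_disjoint) auto
  finally show "(\<Sum>i\<in>{i\<in>E-{e}. (if h i = p then q else h i) = q}. v i) = (\<Sum>i\<in>{i\<in>E. h i = q}. v i) + (\<Sum>i\<in>{i\<in>E. h i = p}. v i) - v e"
    using s1 by simp
  have s2: "{i\<in>E-{e}. (if t i = p then q else t i) = q} = ({i\<in>E. t i = q} \<union> {i\<in>E. t i = p}) - {e}" using assms by auto
  have fin2: "finite ({i\<in>E. t i = q} \<union> {i\<in>E. t i = p})" using assms by auto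
  have "(\<Sum>i\<in>({i\<in>E. t i = q} \<union> {i\<in>E. t i = p}) - {e}. v i) = (\<Sum>i\<in>({i\<in>E. t i = q} \<union> {i\<in>E. t i = p}). v i) - v e"
    proof -
    have "e \<in> {i\<in>E. t i = q} \<union> {i\<in>E. t i = p}" using assms by auto
    from sum.remove[OF fin2 this, of v] show ?thesis by linarith
  qed
  also have "\<dots> = (\<Sum>i\<in>{i\<in>E. t i = q}. v i) + (\<Sum>i\<in>{i\<in>E. t i = p}. v i) - v e"
    using assms by (subst sum.union_disjoint) auto
  finally show "(\<Sum>i\<in>{i\<in>E-{e}. (if t i = p then q else t i) = q}. v i) = (\<Sum>i\<in>{i\<in>E. t i = q}. v i) + (\<Sum>i\<in>{i\<in>E. t i = p}. v i) - v e"
    using s2 by simp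
qed

lemma netsol_merge:
  assumes "finite E" "e \<in> E" "h e = p" "t e = q" "p \<noteq> q" "p \<in> V"
    and "netsol E V h t v"
  shows "netsol (E-{e}) (V-{p}) (\<lambda>i. if h i = p then q else h i) (\<lambda>i. if t i = p then q else t i) v"
  unfolding netsol_def
proof
  fix x assume x: "x \<in> V - {p}"
  show "(\<Sum>i\<in>{i\<in>E-{e}. (if h i = p then q else h i) = x}. v i) = (\<Sum>i\<in>{i\<in>E-{e}. (if t i = p then q else t i) = x}. v i)"
  proof (cases "x = q")
    case True
    have "q \<in> V" using x True by simp
    then show ?thesis using assms True merge_q[of E e h p t q v, OF assms(1-5)] unfolding netsol_def by auto
  next
    case False
    then show ?thesis using x assms merge_other[of E e h p t q x v, OF assms(1-5)] unfolding netsol_def by auto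
  qed
qed

lemma netsol_unmerge:
  assumes "finite E" "e \<in> E" "h e = p" "t e = q" "p \<noteq> q" "p \<in> V"
    and "netsol (E-{e}) (V-{p}) (\<lambda>i. if h i = p then q else h i) (\<lambda>i. if t i = p then q else t i) v"
    and "(\<Sum>i\<in>{i\<in>E. h i = p}. v i) = (\<Sum>i\<in>{i\<in>E. t i = p}. v i)"
  shows "netsol E V h t v"
  unfolding netsol_def
proof
  fix x assume x: "x \<in> V"
  show "(\<Sum>i\<in>{i\<in>E. h i = x}. v i) = (\<Sum>i\<in>{i\<in>E. t i = x}. v i)"
  proof (cases "x = p")
    case True then show ?thesis using assms by simp
  next
    case np: False
    show ?thesis
    proof (cases "x = q")
      case True
      have "q \<in> V - {p}" using x True np by simp
      then have "(\<Sum>i\<in>{i\<in>E-{e}. (if h i = p then q else h i) = q}. v i) = (\<Sum>i\<in>{i\<in>E-{e}. (if t i = p then q else t i) = q}. v i)"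
        using assms(7) unfolding netsol_def by blast
      then show ?thesis unfolding True using assms(8) merge_q[of E e h p t q v, OF assms(1-5)] by linarith
    next
      case False
      then show ?thesis using x np assms merge_other[of E e h p t q x v, OF assms(1-5)] unfolding netsol_def by auto
    qed
  qed
qed


lemma intN_step:
  assumes "finite E" "e \<in> N" "N \<subseteq> E" "h e = p" "t e = q" "p \<noteq> q" "p \<in> V"
    and IH: "intN (E-{e}) (N-{e}) (V-{p}) (\<lambda>i. if h i = p then q else h i) (\<lambda>i. if t i = p then q else t i)"
  shows "intN E N V h t"
  unfolding intN_def
proof (intro allI impI)
  fix s assume ns: "netsol E V h t s" and si: "\<forall>i\<in>E-N. s i \<in> \<int>"
  have eE: "e \<in> E" using assms by auto
  have ns': "netsol (E-{e}) (V-{p}) (\<lambda>i. if h i = p then q else h i) (\<lambda>i. if t i = p then q else t i) s"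
    using netsol_merge[OF assms(1) eE assms(4-7) ns] .
  have eq: "E - {e} - (N - {e}) = E - N" using assms(2) by auto
  have N': "\<forall>i\<in>N-{e}. s i \<in> \<int>" using IH ns' si unfolding intN_def eq by blast
  have all': "\<forall>i\<in>E-{e}. s i \<in> \<int>" using N' si by blast
  have "(\<Sum>i\<in>{i\<in>E. h i = p}. s i) = (\<Sum>i\<in>{i\<in>E. t i = p}. s i)" using ns assms unfolding netsol_def by blast
  moreover have "(\<Sum>i\<in>{i\<in>E. h i = p}. s i) = s e + (\<Sum>i\<in>{i\<in>E. h i = p} - {e}. s i)"
    using assms eE by (intro sum.remove) auto
  ultimately have se: "s e = (\<Sum>i\<in>{i\<in>E. t i = p}. s i) - (\<Sum>i\<in>{i\<in>E. h i = p} - {e}. s i)" by linarith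
  have "(\<Sum>i\<in>{i\<in>E. t i = p}. s i) \<in> \<int>" using all' assms by (intro Ints_sum) auto
  moreover have "(\<Sum>i\<in>{i\<in>E. h i = p} - {e}. s i) \<in> \<int>" using all' by (intro Ints_sum) auto
  ultimately have "s e \<in> \<int>" unfolding se by (rule Ints_diff)
  then show "\<forall>i\<in>N. s i \<in> \<int>" using N' by blast
qed

lemma goodN_step:
  assumes "finite E" "e \<in> N" "N \<subseteq> E" "h e = p" "t e = q" "p \<noteq> q" "p \<in> V"
    and G: "goodN E N V h t"
  shows "goodN (E-{e}) (N-{e}) (V-{p}) (\<lambda>i. if h i = p then q else h i) (\<lambda>i. if t i = p then q else t i)"
  unfolding goodN_def
proof (intro allI impI)
  fix v' assume z: "\<forall>i\<in>E-{e}-(N-{e}). v' i = 0"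
    and ns': "netsol (E-{e}) (V-{p}) (\<lambda>i. if h i = p then q else h i) (\<lambda>i. if t i = p then q else t i) v'"
  have eE: "e \<in> E" using assms by auto
  define c where "c = (\<Sum>i\<in>{i\<in>E. t i = p}. v' i) - (\<Sum>i\<in>{i\<in>E. h i = p} - {e}. v' i)"
  define v where "v = v'(e := c)"
  have agree: "\<And>i. i \<in> E - {e} \<Longrightarrow> v i = v' i" unfolding v_def by simp
  have ns2: "netsol (E-{e}) (V-{p}) (\<lambda>i. if h i = p then q else h i) (\<lambda>i. if t i = p then q else t i) v"
    using ns' netsol_cong[of "E-{e}" v v' "V-{p}"] agree by blast
  have ve: "v e = c" unfolding v_def by simp
  have r1: "(\<Sum>i\<in>{i\<in>E. h i = p}. v i) = v e + (\<Sum>i\<in>{i\<in>E. h i = p} - {e}. v i)"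
    using assms eE by (intro sum.remove) auto
  have r2: "(\<Sum>i\<in>{i\<in>E. h i = p} - {e}. v i) = (\<Sum>i\<in>{i\<in>E. h i = p} - {e}. v' i)"
    using agree by (intro sum.cong) auto
  have r3: "(\<Sum>i\<in>{i\<in>E. t i = p}. v' i) = (\<Sum>i\<in>{i\<in>E. t i = p}. v i)"
  proof (intro sum.cong refl)
    fix i assume "i \<in> {i\<in>E. t i = p}"
    moreover then have "i \<noteq> e" using assms(4-6) by auto
    ultimately show "v' i = v i" using agree by auto
  qed
  have hp: "(\<Sum>i\<in>{i\<in>E. h i = p}. v i) = (\<Sum>i\<in>{i\<in>E. t i = p}. v i)"
    using r1 r2 r3 ve unfolding c_def by linarith
  have "netsol E V h t v" using netsol_unmerge[OF assms(1) eE assms(4-7) ns2 hp] .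
  moreover have "\<forall>i\<in>E-N. v i = 0"
  proof
    fix i assume i: "i \<in> E - N"
    then have "i \<noteq> e" using assms(2) by blast
    then show "v i = 0" using z i agree by auto
  qed
  ultimately have "\<forall>i\<in>N. v i = 0" using G unfolding goodN_def by blast
  then show "\<forall>i\<in>N-{e}. v' i = 0"
  proof (intro ballI)
    fix i assume i: "i \<in> N - {e}"
    then have "i \<in> E - {e}" using assms(3) by blast
    then have "v' i = v i" using agree by simp
    then show "v' i = 0" using \<open>\<forall>i\<in>N. v i = 0\<close> i by simp
  qed
qed

lemma goodN_intN:
  assumes "finite E" "N \<subseteq> E" "goodN E N V h t"
  shows "intN E N V h t"
  using assms
proof (induction "card N" arbitrary: E N V h t rule: less_induct)
  case less
  show ?case
  proof (cases "N = {}")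
    case True then show ?thesis unfolding intN_def by auto
  next
    case False
    then obtain e where eN: "e \<in> N" by auto
    have eE: "e \<in> E" using eN less(3) by auto
    have finN: "finite N" using less(2,3) finite_subset by blast
    have cardlt: "card (N - {e}) < card N" using eN finN using card_gt_0_iff by (metis card_Diff1_less)
    have sub: "N - {e} \<subseteq> E - {e}" using less(3) by auto
    have finE: "finite (E - {e})" using less(2) by auto
    show ?thesis
    proof (cases "h e \<noteq> t e \<and> (h e \<in> V \<or> t e \<in> V)")
      case False
      define v where "v = (\<lambda>i. if i = e then (1::real) else 0)"
      have "netsol E V h t v"
        unfolding netsol_def
      proof
        fix x assume x: "x \<in> V"
        have fin: "finite {i\<in>E. h i = x}" "finite {i\<in>E. t i = x}" using less(2) by auto
        have "(\<Sum>i\<in>{i\<in>E. h i = x}. v i) = (if h e = x then 1 else 0)"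
          unfolding v_def using sum.delta[OF fin(1), of e "\<lambda>_. 1::real"] eE by auto
        moreover have "(\<Sum>i\<in>{i\<in>E. t i = x}. v i) = (if t e = x then 1 else 0)"
          unfolding v_def using sum.delta[OF fin(2), of e "\<lambda>_. 1::real"] eE by auto
        ultimately show "(\<Sum>i\<in>{i\<in>E. h i = x}. v i) = (\<Sum>i\<in>{i\<in>E. t i = x}. v i)"
          using False x by auto
      qed
      moreover have "\<forall>i\<in>E-N. v i = 0" using eN by (auto simp: v_def)
      ultimately have "v e = 0" using less(4) eN unfolding goodN_def by blast
      then show ?thesis by (simp add: v_def)
    next
      case True
      show ?thesis
      proof (cases "h e \<in> V")
        case hV: True
        have ne: "h e \<noteq> t e" using True by blast
        let ?h = "\<lambda>i. if h i = h e then t e else h i"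
        let ?t = "\<lambda>i. if t i = h e then t e else t i"
        have g: "goodN (E-{e}) (N-{e}) (V-{h e}) ?h ?t"
          using goodN_step[where E=E and e=e and N=N and h=h and p="h e" and t=t and q="t e" and V=V, OF less(2) eN less(3) refl refl ne hV less(4)] .
        have "intN (E-{e}) (N-{e}) (V-{h e}) ?h ?t"
          using less(1)[OF cardlt finE sub g] .
        then show ?thesis using intN_step[where E=E and e=e and N=N and h=h and p="h e" and t=t and q="t e" and V=V, OF less(2) eN less(3) refl refl ne hV] by blast
      next
        case hV: False
        then have tV: "t e \<in> V" using True by blast
        have ne: "t e \<noteq> h e" using True by auto
        have G': "goodN E N V t h" using less(4) goodN_sym[of E N V h t] by simp
        let ?h = "\<lambda>i. if t i = t e then h e else t i"
        let ?t = "\<lambda>i. if h i = t e then h e else h i"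
        have g: "goodN (E-{e}) (N-{e}) (V-{t e}) ?h ?t"
          using goodN_step[where E=E and e=e and N=N and h=t and p="t e" and t=h and q="h e" and V=V, OF less(2) eN less(3) refl refl ne tV G'] .
        have "intN (E-{e}) (N-{e}) (V-{t e}) ?h ?t"
          using less(1)[OF cardlt finE sub g] .
        then have "intN E N V t h" using intN_step[where E=E and e=e and N=N and h=t and p="t e" and t=h and q="h e" and V=V, OF less(2) eN less(3) refl refl ne tV] by blast
        then show ?thesis using intN_sym[of E N V h t] by simp
      qed
    qed
  qed
qed



lemma incoming_sub: "incoming S p \<subseteq> {..<length S}" "outgoing S p \<subseteq> {..<length S}"
  unfolding incoming_def outgoing_def from_south_def from_west_def to_north_def to_east_def by auto

lemma incoming_eq:
  assumes "drawing a b S"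
  shows "incoming S p = {i\<in>{..<length S}. snd (S!i) = p}"
    and "outgoing S p = {i\<in>{..<length S}. fst (S!i) = p}"
proof -
  have vh: "\<And>i. i < length S \<Longrightarrow> vertical_seg (S!i) \<or> horizontal_seg (S!i)"
    using assms unfolding drawing_def by (meson nth_mem)
  show "incoming S p = {i\<in>{..<length S}. snd (S!i) = p}"
    unfolding incoming_def from_south_def from_west_def using vh by auto
  show "outgoing S p = {i\<in>{..<length S}. fst (S!i) = p}"
    unfolding outgoing_def to_north_def to_east_def using vh by auto
qed

lemma K_netsol:
  assumes "drawing a b S" "x \<in> carrier_vec (length S)"
  shows "x \<in> kirchhoff_space a b S \<longleftrightarrow>
    netsol {..<length S} {p. interior_node a b S p} (\<lambda>i. snd (S!i)) (\<lambda>i. fst (S!i)) (\<lambda>i. x $ i)"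
  using assms unfolding kirchhoff_space_def netsol_def incoming_eq[OF assms(1)] by auto

lemma param_facts:
  assumes "parametrization a b S \<tau>"
  shows "bij_betw (coord_map (kirchhoff_dim a b S) \<tau>) (kirchhoff_space a b S) (carrier_vec (kirchhoff_dim a b S))"
    and "\<And>j. j < kirchhoff_dim a b S \<Longrightarrow> \<tau> j < length S"
  using assms unfolding parametrization_def Let_def by auto

lemma param_inv_facts:
  assumes "parametrization a b S \<tau>" "y \<in> carrier_vec (kirchhoff_dim a b S)"
  shows "param_inv a b S \<tau> y \<in> kirchhoff_space a b S"
    and "coord_map (kirchhoff_dim a b S) \<tau> (param_inv a b S \<tau> y) = y"
proof -
  have b: "bij_betw (coord_map (kirchhoff_dim a b S) \<tau>) (kirchhoff_space a b S) (carrier_vec (kirchhoff_dim a b S))"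
    using param_facts(1)[OF assms(1)] .
  then have inj: "inj_on (coord_map (kirchhoff_dim a b S) \<tau>) (kirchhoff_space a b S)"
    and im: "y \<in> coord_map (kirchhoff_dim a b S) \<tau> ` kirchhoff_space a b S"
    using assms(2) unfolding bij_betw_def by auto
  show "param_inv a b S \<tau> y \<in> kirchhoff_space a b S"
    unfolding param_inv_def using the_inv_into_into[OF inj im] by blast
  show "coord_map (kirchhoff_dim a b S) \<tau> (param_inv a b S \<tau> y) = y"
    unfolding param_inv_def using f_the_inv_into_f[OF inj im] .
qed

lemma param_inj:
  assumes "parametrization a b S \<tau>" "s \<in> kirchhoff_space a b S" "s' \<in> kirchhoff_space a b S"
    "coord_map (kirchhoff_dim a b S) \<tau> s = coord_map (kirchhoff_dim a b S) \<tau> s'"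
  shows "s = s'"
  using param_facts(1)[OF assms(1)] assms(2-4) unfolding bij_betw_def inj_on_def by blast

lemma K_carrier: "s \<in> kirchhoff_space a b S \<Longrightarrow> s \<in> carrier_vec (length S)"
  unfolding kirchhoff_space_def by auto

lemma zero_K: "0\<^sub>v (length S) \<in> kirchhoff_space a b S"
proof -
  have "\<And>A. A \<subseteq> {..<length S} \<Longrightarrow> (\<Sum>i\<in>A. 0\<^sub>v (length S) $ i) = (0::real)" by (auto intro!: sum.neutral)
  then show ?thesis unfolding kirchhoff_space_def using incoming_sub by auto
qed

lemma integrality:
  assumes D: "drawing a b S" and P: "parametrization a b S \<tau>'"
    and w: "w \<in> kirchhoff_space a b S"
    and wi: "\<forall>j<kirchhoff_dim a b S. w $ \<tau>' j \<in> \<int>"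
  shows "\<forall>i<length S. w $ i \<in> \<int>"
proof -
  let ?d = "kirchhoff_dim a b S" and ?l = "length S"
  let ?E = "{..<?l}" and ?N = "{..<?l} - \<tau>' ` {..<?d}"
  let ?V = "{p. interior_node a b S p}"
  let ?h = "\<lambda>i. snd (S!i)" and ?t = "\<lambda>i. fst (S!i)"
  have tl: "\<And>j. j < ?d \<Longrightarrow> \<tau>' j < ?l" using param_facts(2)[OF P] .
  have good: "goodN ?E ?N ?V ?h ?t"
    unfolding goodN_def
  proof (intro allI impI)
    fix v assume z: "\<forall>i\<in>?E - ?N. v i = 0" and ns: "netsol ?E ?V ?h ?t v"
    define u where "u = vec ?l v"
    have uc: "u \<in> carrier_vec ?l" unfolding u_def by simp
    have "netsol ?E ?V ?h ?t (\<lambda>i. u $ i)"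
      using ns netsol_cong[of ?E "\<lambda>i. u $ i" v ?V ?h ?t] unfolding u_def by auto
    then have uK: "u \<in> kirchhoff_space a b S" using K_netsol[OF D uc] by simp
    have "coord_map ?d \<tau>' u = coord_map ?d \<tau>' (0\<^sub>v ?l)"
      unfolding coord_map_def
    proof (rule eq_vecI)
      fix j assume "j < dim_vec (vec ?d (\<lambda>j. 0\<^sub>v ?l $ \<tau>' j))"
      then have j: "j < ?d" by simp
      have "\<tau>' j \<in> ?E - ?N" using j tl by auto
      then show "vec ?d (\<lambda>j. u $ \<tau>' j) $ j = vec ?d (\<lambda>j. 0\<^sub>v ?l $ \<tau>' j) $ j"
        using z j tl unfolding u_def by auto
    qed simp
    then have "u = 0\<^sub>v ?l" using param_inj[OF P uK zero_K] by blast
    then show "\<forall>i\<in>?N. v i = 0" unfolding u_def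
      by (metis DiffD1 index_vec index_zero_vec(1) lessThan_iff)
  qed
  have int: "intN ?E ?N ?V ?h ?t" using goodN_intN[OF _ _ good] by auto
  have wc: "w \<in> carrier_vec ?l" using K_carrier[OF w] .
  have ns: "netsol ?E ?V ?h ?t (\<lambda>i. w $ i)" using K_netsol[OF D wc] w by simp
  have "\<forall>i\<in>?E - ?N. w $ i \<in> \<int>" using wi by auto
  then have "\<forall>i\<in>?N. w $ i \<in> \<int>" using int ns unfolding intN_def by blast
  then show ?thesis using \<open>\<forall>i\<in>?E - ?N. w $ i \<in> \<int>\<close> by blast
qed



lemma param_linear:
  assumes P: "parametrization a b S \<tau>'" and x: "x \<in> carrier_vec (kirchhoff_dim a b S)"
    and i: "i < length S"
  shows "param_inv a b S \<tau>' x $ i =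
    (\<Sum>k<kirchhoff_dim a b S. x $ k * param_inv a b S \<tau>' (unit_vec (kirchhoff_dim a b S) k) $ i)"
proof -
  let ?d = "kirchhoff_dim a b S" and ?l = "length S"
  let ?D = "param_inv a b S \<tau>'" and ?C = "coord_map (kirchhoff_dim a b S) \<tau>'"
  let ?W = "\<lambda>k. ?D (unit_vec ?d k)"
  have WK: "\<And>k. k < ?d \<Longrightarrow> ?W k \<in> kirchhoff_space a b S"
    using param_inv_facts(1)[OF P] by simp
  have WC: "\<And>k. k < ?d \<Longrightarrow> ?C (?W k) = unit_vec ?d k"
    using param_inv_facts(2)[OF P] by simp
  have tl: "\<And>j. j < ?d \<Longrightarrow> \<tau>' j < ?l" using param_facts(2)[OF P] .
  define u where "u = vec ?l (\<lambda>i. \<Sum>k<?d. x $ k * ?W k $ i)"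
  have sumeq: "(\<Sum>i\<in>A. u $ i) = (\<Sum>k<?d. x $ k * (\<Sum>i\<in>A. ?W k $ i))" if "A \<subseteq> {..<?l}" for A
  proof -
    have "(\<Sum>i\<in>A. u $ i) = (\<Sum>i\<in>A. \<Sum>k<?d. x $ k * ?W k $ i)"
      using that unfolding u_def by (intro sum.cong) auto
    also have "\<dots> = (\<Sum>k<?d. \<Sum>i\<in>A. x $ k * ?W k $ i)" by (rule sum.swap)
    also have "\<dots> = (\<Sum>k<?d. x $ k * (\<Sum>i\<in>A. ?W k $ i))" by (simp add: sum_distrib_left)
    finally show ?thesis .
  qed
  have uK: "u \<in> kirchhoff_space a b S"
    unfolding kirchhoff_space_def
  proof (intro CollectI conjI allI impI)
    show "u \<in> carrier_vec ?l" unfolding u_def by simp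
    fix p assume p: "interior_node a b S p"
    have "\<And>k. k < ?d \<Longrightarrow> (\<Sum>i\<in>incoming S p. ?W k $ i) = (\<Sum>i\<in>outgoing S p. ?W k $ i)"
      using WK p unfolding kirchhoff_space_def by blast
    then show "(\<Sum>i\<in>incoming S p. u $ i) = (\<Sum>i\<in>outgoing S p. u $ i)"
      unfolding sumeq[OF incoming_sub(1)] sumeq[OF incoming_sub(2)] by (intro sum.cong) auto
  qed
  have "?C u = x"
  proof (rule eq_vecI)
    fix j assume "j < dim_vec x"
    then have j: "j < ?d" using x by simp
    have "?C u $ j = u $ \<tau>' j" unfolding coord_map_def using j by simp
    also have "\<dots> = (\<Sum>k<?d. x $ k * ?W k $ \<tau>' j)" unfolding u_def using tl[OF j] by simp
    also have "\<dots> = (\<Sum>k<?d. x $ k * (if j = k then 1 else 0))"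
    proof (intro sum.cong refl)
      fix k assume k: "k \<in> {..<?d}"
      have "?W k $ \<tau>' j = ?C (?W k) $ j" unfolding coord_map_def using j by simp
      also have "\<dots> = (if j = k then 1 else 0)" using WC k j by simp
      finally show "x $ k * ?W k $ \<tau>' j = x $ k * (if j = k then 1 else 0)" by simp
    qed
    also have "\<dots> = (\<Sum>k<?d. if j = k then x $ k else 0)" by (intro sum.cong) auto
    also have "\<dots> = x $ j" using j by (subst sum.delta') auto
    finally show "?C u $ j = x $ j" .
  qed (use x in \<open>simp add: coord_map_def\<close>)
  then have "?D x = u"
    using param_inj[OF P param_inv_facts(1)[OF P x] uK] param_inv_facts(2)[OF P x] by simp
  then show ?thesis unfolding u_def using i by simp
qed

lemma det_Ints:
  assumes "A \<in> carrier_mat n n" "\<And>i j. i < n \<Longrightarrow> j < n \<Longrightarrow> A $$ (i,j) \<in> (\<int> :: real set)"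
  shows "det A \<in> \<int>"
  unfolding det_def'[OF assms(1)]
proof (intro Ints_sum Ints_mult Ints_prod)
  fix p assume "p \<in> {p. p permutes {0..<n}}"
  then have "\<And>i. i \<in> {0..<n} \<Longrightarrow> p i < n" by (auto dest: permutes_in_image)
  then show "\<And>i. i \<in> {0..<n} \<Longrightarrow> A $$ (i, p i) \<in> \<int>" using assms(2) by auto
qed (rule Ints_of_int)


lemma matrix_apply:
  assumes P: "parametrization a b S \<tau>'" and Q: "parametrization a b S \<tau>"
    and x: "x \<in> carrier_vec (kirchhoff_dim a b S)"
  shows "matrix_of_map (kirchhoff_dim a b S) (coord_map (kirchhoff_dim a b S) \<tau> \<circ> param_inv a b S \<tau>') *\<^sub>v x
       = coord_map (kirchhoff_dim a b S) \<tau> (param_inv a b S \<tau>' x)"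
proof -
  let ?d = "kirchhoff_dim a b S"
  let ?M = "matrix_of_map ?d (coord_map ?d \<tau> \<circ> param_inv a b S \<tau>')"
  have tl: "\<And>j. j < ?d \<Longrightarrow> \<tau> j < length S" using param_facts(2)[OF Q] .
  show ?thesis
  proof (rule eq_vecI)
    fix j assume "j < dim_vec (coord_map ?d \<tau> (param_inv a b S \<tau>' x))"
    then have j: "j < ?d" by (simp add: coord_map_def)
    have "(?M *\<^sub>v x) $ j = row ?M j \<bullet> x" using j by (simp add: matrix_of_map_def)
    also have "\<dots> = (\<Sum>k\<in>{0..<?d}. ?M $$ (j,k) * x $ k)"
      unfolding scalar_prod_def using x j by (intro sum.cong) (auto simp: matrix_of_map_def)
    also have "\<dots> = (\<Sum>k<?d. x $ k * param_inv a b S \<tau>' (unit_vec ?d k) $ \<tau> j)"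
      using j by (intro sum.cong) (auto simp: matrix_of_map_def coord_map_def)
    also have "\<dots> = param_inv a b S \<tau>' x $ \<tau> j" using param_linear[OF P x tl[OF j]] by simp
    also have "\<dots> = coord_map ?d \<tau> (param_inv a b S \<tau>' x) $ j" using j by (simp add: coord_map_def)
    finally show "(?M *\<^sub>v x) $ j = coord_map ?d \<tau> (param_inv a b S \<tau>' x) $ j" .
  qed (simp add: matrix_of_map_def coord_map_def)
qed

lemma matrix_Ints:
  assumes D: "drawing a b S" and P: "parametrization a b S \<tau>'" and Q: "parametrization a b S \<tau>"
  shows "det (matrix_of_map (kirchhoff_dim a b S) (coord_map (kirchhoff_dim a b S) \<tau> \<circ> param_inv a b S \<tau>')) \<in> \<int>"
proof (rule det_Ints)
  let ?d = "kirchhoff_dim a b S"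
  show "matrix_of_map ?d (coord_map ?d \<tau> \<circ> param_inv a b S \<tau>') \<in> carrier_mat ?d ?d"
    by (simp add: matrix_of_map_def)
  fix j k assume j: "j < ?d" and k: "k < ?d"
  let ?w = "param_inv a b S \<tau>' (unit_vec ?d k)"
  have wK: "?w \<in> kirchhoff_space a b S" using param_inv_facts(1)[OF P] by simp
  have wC: "coord_map ?d \<tau>' ?w = unit_vec ?d k" using param_inv_facts(2)[OF P] by simp
  have "\<forall>j'<?d. ?w $ \<tau>' j' \<in> \<int>"
  proof (intro allI impI)
    fix j' assume j': "j' < ?d"
    have "?w $ \<tau>' j' = coord_map ?d \<tau>' ?w $ j'" using j' by (simp add: coord_map_def)
    then show "?w $ \<tau>' j' \<in> \<int>" using wC j' k by simp
  qed
  then have "\<forall>i<length S. ?w $ i \<in> \<int>" using integrality[OF D P wK] by blast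
  then have "?w $ \<tau> j \<in> \<int>" using param_facts(2)[OF Q j] by blast
  then show "matrix_of_map ?d (coord_map ?d \<tau> \<circ> param_inv a b S \<tau>') $$ (j, k) \<in> \<int>"
    using j k by (simp add: matrix_of_map_def coord_map_def)
qed

lemma roundtrip:
  assumes P: "parametrization a b S \<tau>'" and Q: "parametrization a b S \<tau>"
    and x: "x \<in> carrier_vec (kirchhoff_dim a b S)"
  shows "coord_map (kirchhoff_dim a b S) \<tau>' (param_inv a b S \<tau> (coord_map (kirchhoff_dim a b S) \<tau> (param_inv a b S \<tau>' x))) = x"
proof -
  let ?d = "kirchhoff_dim a b S"
  let ?w = "param_inv a b S \<tau>' x"
  have wK: "?w \<in> kirchhoff_space a b S" using param_inv_facts(1)[OF P x] .
  have yc: "coord_map ?d \<tau> ?w \<in> carrier_vec ?d" using param_facts(1)[OF Q] wK by (auto dest: bij_betwE)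
  have "param_inv a b S \<tau> (coord_map ?d \<tau> ?w) = ?w"
    using param_inj[OF Q param_inv_facts(1)[OF Q yc] wK] param_inv_facts(2)[OF Q yc] by simp
  then show ?thesis using param_inv_facts(2)[OF P x] by simp
qed

theorem lemma3:
  fixes a b :: real and S :: "segment list" and \<tau> \<tau>' :: "nat \<Rightarrow> nat"
  assumes "drawing a b S"
    and "parametrization a b S \<tau>"
    and "parametrization a b S \<tau>'"
  shows "\<bar>det (matrix_of_map (kirchhoff_dim a b S)
            (coord_map (kirchhoff_dim a b S) \<tau> \<circ> param_inv a b S \<tau>'))\<bar> = 1"
proof -
  let ?d = "kirchhoff_dim a b S"
  let ?M = "matrix_of_map ?d (coord_map ?d \<tau> \<circ> param_inv a b S \<tau>')"
  let ?M' = "matrix_of_map ?d (coord_map ?d \<tau>' \<circ> param_inv a b S \<tau>)"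
  have Mc: "?M \<in> carrier_mat ?d ?d" and M'c: "?M' \<in> carrier_mat ?d ?d" by (simp_all add: matrix_of_map_def)
  have prod: "?M' * ?M = 1\<^sub>m ?d"
  proof (rule eq_matI)
    fix j k assume "j < dim_row (1\<^sub>m ?d)" "k < dim_col (1\<^sub>m ?d)"
    then have j: "j < ?d" and k: "k < ?d" by auto
    let ?y = "coord_map ?d \<tau> (param_inv a b S \<tau>' (unit_vec ?d k))"
    have ek: "unit_vec ?d k \<in> carrier_vec ?d" by simp
    have colk: "col ?M k = ?y"
      using matrix_apply[OF assms(3) assms(2) ek] k
      by (intro eq_vecI) (auto simp: matrix_of_map_def coord_map_def)
    have yc: "?y \<in> carrier_vec ?d" by (simp add: coord_map_def)
    have "(?M' * ?M) $$ (j,k) = row ?M' j \<bullet> col ?M k" using j k Mc M'c by simp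
    also have "\<dots> = (?M' *\<^sub>v ?y) $ j" using j M'c colk by simp
    also have "\<dots> = unit_vec ?d k $ j"
      using matrix_apply[OF assms(2) assms(3) yc] roundtrip[OF assms(3) assms(2) ek] by simp
    also have "\<dots> = 1\<^sub>m ?d $$ (j,k)" using j k by simp
    finally show "(?M' * ?M) $$ (j,k) = 1\<^sub>m ?d $$ (j,k)" .
  qed (use Mc M'c in auto)
  have "det ?M' * det ?M = 1" using det_mult[OF M'c Mc] prod by simp
  moreover have "det ?M \<in> \<int>" using matrix_Ints[OF assms(1) assms(3) assms(2)] .
  moreover have "det ?M' \<in> \<int>" using matrix_Ints[OF assms(1) assms(2) assms(3)] .
  ultimately show ?thesis
  proof -
    assume h: "det ?M' * det ?M = 1" "det ?M \<in> \<int>" "det ?M' \<in> \<int>"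
    obtain m where m: "det ?M = of_int m" using h(2) Ints_cases by blast
    obtain n where n: "det ?M' = of_int n" using h(3) Ints_cases by blast
    have "of_int (n * m) = (1::real)" using h(1) m n by simp
    then have "n * m = 1" by linarith
    then have "\<bar>m\<bar> = 1" using zmult_eq_1_iff by (metis abs_1 abs_mult abs_of_nonneg abs_zmult_eq_1 zero_le_one)
    then show ?thesis using m by simp
  qed
qed

end
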